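(* Let $\alpha>0$, $h>0$, let $(Y_k)_{k\ge0}$ be i.i.d. random variables with $\mathbb{E}[Y_1]=0$, $\mathbb{E}[Y_1^2]=1$, let $B^h_t=\sqrt{h}\sum_{k=0}^{\lfloor t/h\rfloor}Y_k$, and let $X^h_{0-}$ be a real-valued random variable independent of $(Y_k)$ whose law is atomless. Define, for increasing $\ell$, $X^h_t[\ell]=X^h_{0-}+B^h_t-\alpha\ell_{h\lfloor t/h\rfloor}$, $\tau^h[\ell]=\inf\{t\ge0:X^h_t[\ell]\le0\}$ and $\Gamma_h[\ell]_t=\mathbb{P}(\tau^h[\ell]\le t)$. Let $\underline{\Lambda}^h$ be the minimal solution of the Donsker problem with initial condition $X^h_{0-}$ (see context). Then $\underline{\Lambda}^h=\alpha\lim_{k\to\infty}\Gamma_h^{(k)}[0]$, where $\Gamma_h^{(k)}$ is the $k$-fold iterate of $\Gamma_h$, $0$ denotes the zero function, and the limit is understood in $M$.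
   Context: Donsker problem: a deterministic function $\Lambda^h$ is a solution if, with $X^h_t=X^h_{0-}+B^h_t-\Lambda^h_t$ and $\tau^h=\inf\{t\ge0:X^h_t\le0\}$, one has $\Lambda^h_t=\alpha\,\mathbb{P}(\tau^h\le t)$ for all $t\ge0$; a solution $\underline{\Lambda}^h$ is minimal if $\underline{\Lambda}^h\le\Lambda^h$ for every solution $\Lambda^h$. $M$ is the set of càdlàg increasing functions $\ell:\overline{\mathbb{R}}\to[0,1]$ with $\ell_{0-}=0$, $\ell_\infty=1$, with $\ell^n\to\ell$ iff $\ell^n_t\to\ell_t$ at all $t\in[0,\infty]$ where $\ell$ is continuous. *)

theory Defs
  imports "HOL-Probability.Probability"
begin

definition Bh :: "real \<Rightarrow> (nat \<Rightarrow> 'a \<Rightarrow> real) \<Rightarrow> real \<Rightarrow> 'a \<Rightarrow> real" where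
  "Bh h Y t \<omega> = sqrt h * (\<Sum>k\<le>nat \<lfloor>t / h\<rfloor>. Y k \<omega>)"

definition hit_time :: "(real \<Rightarrow> 'a \<Rightarrow> real) \<Rightarrow> 'a \<Rightarrow> ereal" where
  "hit_time X \<omega> = Inf {ereal s | s. 0 \<le> s \<and> X s \<omega> \<le> 0}"

definition donsker_solution ::
  "'a measure \<Rightarrow> real \<Rightarrow> real \<Rightarrow> ('a \<Rightarrow> real) \<Rightarrow> (nat \<Rightarrow> 'a \<Rightarrow> real) \<Rightarrow> (real \<Rightarrow> real) \<Rightarrow> bool" where
  "donsker_solution M h \<alpha> X0 Y \<Lambda> \<longleftrightarrow>
     (\<forall>t\<ge>0. \<Lambda> t = \<alpha> * measure M {\<omega> \<in> space M.
        hit_time (\<lambda>s \<omega>. X0 \<omega> + Bh h Y s \<omega> - \<Lambda> s) \<omega> \<le> ereal t})"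

definition minimal_donsker_solution ::
  "'a measure \<Rightarrow> real \<Rightarrow> real \<Rightarrow> ('a \<Rightarrow> real) \<Rightarrow> (nat \<Rightarrow> 'a \<Rightarrow> real) \<Rightarrow> (real \<Rightarrow> real) \<Rightarrow> bool" where
  "minimal_donsker_solution M h \<alpha> X0 Y \<Lambda> \<longleftrightarrow>
     donsker_solution M h \<alpha> X0 Y \<Lambda> \<and>
     (\<forall>\<Lambda>'. donsker_solution M h \<alpha> X0 Y \<Lambda>' \<longrightarrow> (\<forall>t\<ge>0. \<Lambda> t \<le> \<Lambda>' t))"

text \<open>Gamma_h[l]_t = P(tau^h[l] <= t) for t in [0,infinity), extended to the extended reals
  as an element of M (0 for t < 0, 1 at infinity).\<close>
definition Gamma_h ::
  "'a measure \<Rightarrow> real \<Rightarrow> real \<Rightarrow> ('a \<Rightarrow> real) \<Rightarrow> (nat \<Rightarrow> 'a \<Rightarrow> real) \<Rightarrow> (ereal \<Rightarrow> real) \<Rightarrow> ereal \<Rightarrow> real" where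
  "Gamma_h M h \<alpha> X0 Y l t =
     (if t < 0 then 0 else if t = \<infinity> then 1 else
      measure M {\<omega> \<in> space M.
        hit_time (\<lambda>s \<omega>. X0 \<omega> + Bh h Y s \<omega> - \<alpha> * l (ereal (h * of_int \<lfloor>s / h\<rfloor>))) \<omega> \<le> t})"

text \<open>The space M: cadlag increasing l : [-infinity,infinity] -> [0,1], l = 0 on negative times
  (so l_{0-} = 0) and l_infinity = 1.\<close>
definition in_M :: "(ereal \<Rightarrow> real) \<Rightarrow> bool" where
  "in_M l \<longleftrightarrow> mono l \<and> (\<forall>t. 0 \<le> l t \<and> l t \<le> 1) \<and> (\<forall>t<0. l t = 0) \<and> l \<infinity> = 1 \<and>
     (\<forall>t. continuous (at_right t) l)"

definition conv_M :: "(nat \<Rightarrow> ereal \<Rightarrow> real) \<Rightarrow> (ereal \<Rightarrow> real) \<Rightarrow> bool" where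
  "conv_M ls l \<longleftrightarrow> (\<forall>t\<ge>0. isCont l t \<longrightarrow> (\<lambda>n. ls n t) \<longlonglongrightarrow> l t)"

end

theory Submission
  imports Defs
begin

definition SS :: "real \<Rightarrow> (nat \<Rightarrow> 'a \<Rightarrow> real) \<Rightarrow> nat \<Rightarrow> 'a \<Rightarrow> real" where
  "SS h Y k \<omega> = sqrt h * (\<Sum>j\<le>k. Y j \<omega>)"

lemma Bh_grid: "Bh h Y s \<omega> = SS h Y (nat \<lfloor>s/h\<rfloor>) \<omega>"
  by (simp add: Bh_def SS_def)

lemma hit_grid:
  fixes h t :: real
  assumes h: "h > 0" and t: "t \<ge> 0" and phi: "\<And>s. s \<ge> 0 \<Longrightarrow> \<phi> s = \<psi> (nat \<lfloor>s/h\<rfloor>)"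
  shows "hit_time (\<lambda>s \<omega>. X0 \<omega> + Bh h Y s \<omega> - \<phi> s) \<omega> \<le> ereal t \<longleftrightarrow>
         (\<exists>j \<le> nat \<lfloor>t/h\<rfloor>. X0 \<omega> + SS h Y j \<omega> - \<psi> j \<le> 0)"
proof -
  let ?S = "{ereal s | s. 0 \<le> s \<and> X0 \<omega> + Bh h Y s \<omega> - \<phi> s \<le> 0}"
  have hs: "hit_time (\<lambda>s \<omega>. X0 \<omega> + Bh h Y s \<omega> - \<phi> s) \<omega> = Inf ?S" by (simp add: hit_time_def)
  have mem: "ereal s \<in> ?S \<longleftrightarrow> 0 \<le> s \<and> X0 \<omega> + SS h Y (nat \<lfloor>s/h\<rfloor>) \<omega> - \<psi> (nat \<lfloor>s/h\<rfloor>) \<le> 0" for s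
    using phi[of s] by (auto simp: Bh_grid)
  show ?thesis
  proof
    assume "\<exists>j \<le> nat \<lfloor>t/h\<rfloor>. X0 \<omega> + SS h Y j \<omega> - \<psi> j \<le> 0"
    then obtain j where j: "j \<le> nat \<lfloor>t/h\<rfloor>" "X0 \<omega> + SS h Y j \<omega> - \<psi> j \<le> 0" by blast
    have fl: "nat \<lfloor>(h * real j)/h\<rfloor> = j" using h by simp
    have "0 \<le> \<lfloor>t/h\<rfloor>" using t h by simp
    then have "int j \<le> \<lfloor>t/h\<rfloor>" using j(1) by (simp add: le_nat_iff)
    then have "real j \<le> real_of_int \<lfloor>t/h\<rfloor>" by (metis of_int_le_iff of_int_of_nat_eq)
    also have "\<dots> \<le> t/h" by simp
    finally have "h * real j \<le> t" using h by (simp add: field_simps)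
    have "ereal (h * real j) \<in> ?S" unfolding mem fl using j h by simp
    hence "Inf ?S \<le> ereal (h*real j)" by (rule Inf_lower)
    also have "\<dots> \<le> ereal t" using \<open>h * real j \<le> t\<close> by simp
    finally show "hit_time (\<lambda>s \<omega>. X0 \<omega> + Bh h Y s \<omega> - \<phi> s) \<omega> \<le> ereal t" using hs by simp
  next
    assume le: "hit_time (\<lambda>s \<omega>. X0 \<omega> + Bh h Y s \<omega> - \<phi> s) \<omega> \<le> ereal t"
    let ?K = "{j. X0 \<omega> + SS h Y j \<omega> - \<psi> j \<le> 0}"
    show "\<exists>j \<le> nat \<lfloor>t/h\<rfloor>. X0 \<omega> + SS h Y j \<omega> - \<psi> j \<le> 0"
    proof (cases "?K = {}")
      case True
      have Se: "?S = {}" using True phi by (auto simp: Bh_grid)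
      have "Inf ?S = (\<infinity>::ereal)" unfolding Se by (simp add: top_ereal_def)
      then show ?thesis using le hs by simp
    next
      case False
      define j0 where "j0 = (LEAST j. j \<in> ?K)"
      have j0K: "j0 \<in> ?K" using False unfolding j0_def by (metis LeastI_ex ex_in_conv)
      have "ereal (h * real j0) \<le> Inf ?S"
      proof (rule Inf_greatest)
        fix x assume "x \<in> ?S"
        then obtain s where s: "x = ereal s" "0 \<le> s" "X0 \<omega> + SS h Y (nat \<lfloor>s/h\<rfloor>) \<omega> - \<psi> (nat \<lfloor>s/h\<rfloor>) \<le> 0"
          using mem by auto
        have "j0 \<le> nat \<lfloor>s/h\<rfloor>" unfolding j0_def using s(3) by (intro Least_le) simp
        then have "real j0 \<le> real (nat \<lfloor>s/h\<rfloor>)" by simp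
        also have "\<dots> = real_of_int \<lfloor>s/h\<rfloor>" using s(2) h by simp
        also have "\<dots> \<le> s/h" by simp
        finally have "real j0 \<le> s/h" .
        then show "ereal (h * real j0) \<le> x" using s(1) h by (simp add: field_simps)
      qed
      then have "ereal (h * real j0) \<le> ereal t" using le hs by (metis order_trans)
      then have "h * real j0 \<le> t" by simp
      then have "real j0 \<le> t/h" using h by (simp add: field_simps)
      then have "int j0 \<le> \<lfloor>t/h\<rfloor>" by (simp add: le_floor_iff)
      then have "j0 \<le> nat \<lfloor>t/h\<rfloor>" by linarith
      then show ?thesis using j0K by blast
    qed
  qed
qed

lemma Inf_le_ereal_iff:
  fixes S :: "ereal set"
  shows "Inf S \<le> ereal t \<longleftrightarrow> (\<forall>n::nat. \<exists>x\<in>S. x < ereal (t + 1 / real (Suc n)))"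
proof
  assume "Inf S \<le> ereal t"
  then show "\<forall>n::nat. \<exists>x\<in>S. x < ereal (t + 1 / real (Suc n))"
    unfolding Inf_le_iff by (auto intro!: ereal_less_eq)
next
  assume R: "\<forall>n::nat. \<exists>x\<in>S. x < ereal (t + 1 / real (Suc n))"
  show "Inf S \<le> ereal t" unfolding Inf_le_iff
  proof (intro allI impI)
    fix y assume y: "ereal t < y"
    obtain n :: nat where n: "ereal (t + 1 / real (Suc n)) \<le> y"
    proof (cases y)
      case (real r)
      then have "0 < r - t" using y by simp
      then obtain n where "inverse (real (Suc n)) < r - t" using reals_Archimedean by blast
      then have "ereal (t + 1 / real (Suc n)) \<le> y" using real by (simp add: field_simps)
      then show ?thesis using that by blast
    next
      case PInf then show ?thesis using that by simp
    next
      case MInf then show ?thesis using y by simp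
    qed
    from R obtain x where "x \<in> S" "x < ereal (t + 1 / real (Suc n))" by blast
    then show "\<exists>a\<in>S. a < y" using n by (meson less_le_trans)
  qed
qed

lemma down_closed_borel:
  fixes D :: "real set"
  assumes "\<And>x y. y \<in> D \<Longrightarrow> x \<le> y \<Longrightarrow> x \<in> D"
  shows "D \<in> sets borel"
  by (rule real_interval_borel_measurable) (use assms in \<open>auto simp: is_interval_1\<close>)

context prob_space
begin

lemma SS_meas:
  assumes X0: "X0 \<in> borel_measurable M" and Y: "\<And>k. Y k \<in> borel_measurable M"
  shows "(\<lambda>\<omega>. X0 \<omega> + SS h Y k \<omega>) \<in> borel_measurable M"
  unfolding SS_def using X0 Y by (intro borel_measurable_add borel_measurable_times borel_measurable_sum borel_measurable_const) auto

lemma hit_meas: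
  assumes h: "h > 0" and X0: "X0 \<in> borel_measurable M" and Y: "\<And>k. Y k \<in> borel_measurable M"
  shows "{\<omega> \<in> space M. hit_time (\<lambda>s \<omega>. X0 \<omega> + Bh h Y s \<omega> - \<phi> s) \<omega> \<le> ereal t} \<in> sets M"
proof -
  define D where "D n k = {x::real. \<exists>s. 0 \<le> s \<and> s < t + 1 / real (Suc n) \<and> nat \<lfloor>s/h\<rfloor> = k \<and> x \<le> \<phi> s}" for n k :: nat
  have Db: "D n k \<in> sets borel" for n k
    by (rule down_closed_borel) (auto simp: D_def intro: order_trans)
  have pt: "hit_time (\<lambda>s \<omega>. X0 \<omega> + Bh h Y s \<omega> - \<phi> s) \<omega> \<le> ereal t \<longleftrightarrow>
      (\<forall>n. \<exists>k. X0 \<omega> + SS h Y k \<omega> \<in> D n k)" for \<omega>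
  proof -
    have e: "(\<exists>x\<in>{ereal s |s. P s}. x < ereal r) \<longleftrightarrow> (\<exists>s. P s \<and> s < r)" for P r by auto
    show ?thesis unfolding hit_time_def Inf_le_ereal_iff D_def e by (auto simp: Bh_grid)
  qed
  have "{\<omega> \<in> space M. \<forall>n. \<exists>k. X0 \<omega> + SS h Y k \<omega> \<in> D n k} \<in> sets M"
  proof (intro sets.sets_Collect_countable_All sets.sets_Collect_countable_Ex)
    fix n k
    have "{\<omega> \<in> space M. X0 \<omega> + SS h Y k \<omega> \<in> D n k} = (\<lambda>\<omega>. X0 \<omega> + SS h Y k \<omega>) -` D n k \<inter> space M" by auto
    also have "\<dots> \<in> sets M" by (rule measurable_sets[OF SS_meas[OF X0 Y] Db])
    finally show "{\<omega> \<in> space M. X0 \<omega> + SS h Y k \<omega> \<in> D n k} \<in> sets M" .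
  qed
  then show ?thesis unfolding pt .
qed

lemma atomless_sum:
  assumes X0: "X0 \<in> borel_measurable M" and Y: "\<And>k. Y k \<in> borel_measurable M"
    and ind: "indep_vars (\<lambda>_. borel) (\<lambda>i. case i of None \<Rightarrow> X0 | Some k \<Rightarrow> Y k) (UNIV :: nat option set)"
    and atom: "\<And>x. measure M {\<omega> \<in> space M. X0 \<omega> = x} = 0"
  shows "measure M {\<omega> \<in> space M. X0 \<omega> + SS h Y k \<omega> = c} = 0"
proof -
  let ?Z = "\<lambda>i. case i of None \<Rightarrow> X0 | Some k \<Rightarrow> Y k"
  have "indep_var borel (?Z None) borel (\<lambda>\<omega>. \<Sum>i\<in>Some ` {..k}. ?Z i \<omega>)"
    by (rule indep_vars_sum) (auto intro: indep_vars_subset[OF ind])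
  moreover have "(\<lambda>\<omega>. \<Sum>i\<in>Some ` {..k}. ?Z i \<omega>) = (\<lambda>\<omega>. \<Sum>j\<le>k. Y j \<omega>)"
    by (simp add: sum.reindex)
  ultimately have iv: "indep_var borel X0 borel (\<lambda>\<omega>. \<Sum>j\<le>k. Y j \<omega>)" by simp
  define T where "T = (\<lambda>\<omega>. \<Sum>j\<le>k. Y j \<omega>)"
  have Tm: "T \<in> borel_measurable M" unfolding T_def using Y by auto
  have deq: "distr M borel X0 \<Otimes>\<^sub>M distr M borel T = distr M (borel \<Otimes>\<^sub>M borel) (\<lambda>x. (X0 x, T x))"
    using iv unfolding indep_var_distribution_eq T_def by simp
  interpret DX: prob_space "distr M borel X0" by (rule prob_space_distr) (use X0 in simp)
  interpret DT: prob_space "distr M borel T" by (rule prob_space_distr) (use Tm in simp)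
  interpret P: pair_prob_space "distr M borel X0" "distr M borel T" ..
  define A where "A = {p :: real \<times> real. fst p + sqrt h * snd p = c}"
  have fm: "(\<lambda>p::real\<times>real. fst p + sqrt h * snd p) \<in> borel_measurable (borel \<Otimes>\<^sub>M borel)" by measurable
  have "A = (\<lambda>p::real\<times>real. fst p + sqrt h * snd p) -` {c} \<inter> space (borel \<Otimes>\<^sub>M borel)"
    by (auto simp: A_def space_pair_measure)
  also have "\<dots> \<in> sets (borel \<Otimes>\<^sub>M borel)" by (rule measurable_sets[OF fm]) simp
  finally have Am: "A \<in> sets (borel \<Otimes>\<^sub>M borel)" .
  have "emeasure M {\<omega> \<in> space M. X0 \<omega> + SS h Y k \<omega> = c} = emeasure M ((\<lambda>x. (X0 x, T x)) -` A \<inter> space M)"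
    by (rule arg_cong[where f="emeasure M"]) (auto simp: A_def SS_def T_def)
  also have "\<dots> = emeasure (distr M (borel \<Otimes>\<^sub>M borel) (\<lambda>x. (X0 x, T x))) A"
    by (rule emeasure_distr[symmetric]) (use X0 Tm Am in auto)
  also have "\<dots> = emeasure (distr M borel X0 \<Otimes>\<^sub>M distr M borel T) A" by (simp add: deq)
  also have "\<dots> = (\<integral>\<^sup>+y. emeasure (distr M borel X0) ((\<lambda>x. (x, y)) -` A) \<partial>distr M borel T)"
    by (rule P.emeasure_pair_measure_alt2) (simp add: Am)
  also have "\<dots> = (\<integral>\<^sup>+y. 0 \<partial>distr M borel T)"
  proof (rule nn_integral_cong)
    fix y
    have "(\<lambda>x. (x, y)) -` A = {c - sqrt h * y}" by (auto simp: A_def)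
    then have "emeasure (distr M borel X0) ((\<lambda>x. (x, y)) -` A) = emeasure M (X0 -` {c - sqrt h * y} \<inter> space M)"
      using X0 by (simp add: emeasure_distr)
    also have "X0 -` {c - sqrt h * y} \<inter> space M = {\<omega> \<in> space M. X0 \<omega> = c - sqrt h * y}" by auto
    also have "emeasure M \<dots> = ennreal (measure M {\<omega> \<in> space M. X0 \<omega> = c - sqrt h * y})"
      by (simp add: emeasure_eq_measure)
    also have "\<dots> = 0" using atom by simp
    finally show "emeasure (distr M borel X0) ((\<lambda>x. (x, y)) -` A) = 0" .
  qed
  also have "\<dots> = 0" by simp
  finally show ?thesis by (simp add: measure_def)
qed


lemma eqset_meas:
  fixes g :: "'a \<Rightarrow> real"
  assumes "g \<in> borel_measurable M"
  shows "{\<omega> \<in> space M. g \<omega> = c} \<in> sets M" "{\<omega> \<in> space M. g \<omega> \<le> c} \<in> sets M"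
proof -
  have "{\<omega> \<in> space M. g \<omega> = c} = g -` {c} \<inter> space M" by auto
  also have "\<dots> \<in> sets M" by (rule measurable_sets[OF assms]) simp
  finally show "{\<omega> \<in> space M. g \<omega> = c} \<in> sets M" .
  have "{\<omega> \<in> space M. g \<omega> \<le> c} = g -` {..c} \<inter> space M" by auto
  also have "\<dots> \<in> sets M" by (rule measurable_sets[OF assms]) simp
  finally show "{\<omega> \<in> space M. g \<omega> \<le> c} \<in> sets M" .
qed

definition Ev :: "real \<Rightarrow> real \<Rightarrow> ('a \<Rightarrow> real) \<Rightarrow> (nat \<Rightarrow> 'a \<Rightarrow> real) \<Rightarrow> (ereal \<Rightarrow> real) \<Rightarrow> nat \<Rightarrow> 'a set" where
  "Ev h \<alpha> X0 Y l K = {\<omega> \<in> space M. \<exists>j\<le>K. X0 \<omega> + SS h Y j \<omega> \<le> \<alpha> * l (ereal (h * real j))}"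

lemma Ev_meas:
  assumes X0: "X0 \<in> borel_measurable M" and Y: "\<And>k. Y k \<in> borel_measurable M"
  shows "Ev h \<alpha> X0 Y l K \<in> sets M"
proof -
  have "Ev h \<alpha> X0 Y l K = {\<omega> \<in> space M. \<exists>j. j \<le> K \<and> X0 \<omega> + SS h Y j \<omega> \<le> \<alpha> * l (ereal (h * real j))}"
    unfolding Ev_def by auto
  also have "\<dots> \<in> sets M"
    by (intro sets.sets_Collect_countable_Ex sets.sets_Collect_conj sets.sets_Collect_const eqset_meas(2) SS_meas X0 Y)
  finally show ?thesis .
qed

lemma Ev_mono_K: "K \<le> K' \<Longrightarrow> Ev h \<alpha> X0 Y l K \<subseteq> Ev h \<alpha> X0 Y l K'"
  unfolding Ev_def by (blast intro: le_trans)

lemma Gamma_eq: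
  assumes h: "h > 0" and t: "t \<ge> 0"
  shows "Gamma_h M h \<alpha> X0 Y l (ereal t) = measure M (Ev h \<alpha> X0 Y l (nat \<lfloor>t/h\<rfloor>))"
proof -
  have *: "hit_time (\<lambda>s \<omega>. X0 \<omega> + Bh h Y s \<omega> - \<alpha> * l (ereal (h * of_int \<lfloor>s / h\<rfloor>))) \<omega> \<le> ereal t \<longleftrightarrow>
     (\<exists>j \<le> nat \<lfloor>t/h\<rfloor>. X0 \<omega> + SS h Y j \<omega> - \<alpha> * l (ereal (h * real j)) \<le> 0)" for \<omega>
  proof (rule hit_grid[OF h t])
    fix s :: real assume "0 \<le> s"
    then have "real_of_int \<lfloor>s/h\<rfloor> = real (nat \<lfloor>s/h\<rfloor>)" using h by simp
    then show "\<alpha> * l (ereal (h * of_int \<lfloor>s / h\<rfloor>)) = \<alpha> * l (ereal (h * real (nat \<lfloor>s/h\<rfloor>)))" by simp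
  qed
  show ?thesis using t unfolding Gamma_h_def Ev_def * by simp
qed

lemma Gamma_neg: "t < 0 \<Longrightarrow> Gamma_h M h \<alpha> X0 Y l t = 0"
  by (simp add: Gamma_h_def)

lemma Gamma_inf: "Gamma_h M h \<alpha> X0 Y l \<infinity> = 1"
  by (simp add: Gamma_h_def)

lemma Gamma_cases:
  obtains "t < 0" | "t = \<infinity>" | r where "t = ereal r" "r \<ge> 0"
  by (cases t) force+

lemma Gamma_bounds:
  assumes h: "h > 0"
  shows "0 \<le> Gamma_h M h \<alpha> X0 Y l t \<and> Gamma_h M h \<alpha> X0 Y l t \<le> 1"
  by (cases t rule: Gamma_cases) (auto simp: Gamma_neg Gamma_inf Gamma_eq[OF h])

lemma Gamma_mono_l:
  assumes h: "h > 0" and a: "\<alpha> > 0" and X0: "X0 \<in> borel_measurable M" and Y: "\<And>k. Y k \<in> borel_measurable M"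
    and le: "\<And>t. l t \<le> l' t"
  shows "Gamma_h M h \<alpha> X0 Y l t \<le> Gamma_h M h \<alpha> X0 Y l' t"
proof (cases t rule: Gamma_cases)
  case (3 r)
  have "\<alpha> * l x \<le> \<alpha> * l' x" for x using le a by (simp add: mult_left_mono)
  then have "Ev h \<alpha> X0 Y l (nat \<lfloor>r/h\<rfloor>) \<subseteq> Ev h \<alpha> X0 Y l' (nat \<lfloor>r/h\<rfloor>)"
    unfolding Ev_def by (blast intro: order_trans)
  then show ?thesis using 3 by (simp add: Gamma_eq[OF h] finite_measure_mono Ev_meas[OF X0 Y])
qed (auto simp: Gamma_neg Gamma_inf)

lemma Gamma_mono_t:
  assumes h: "h > 0" and X0: "X0 \<in> borel_measurable M" and Y: "\<And>k. Y k \<in> borel_measurable M"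
  shows "mono (Gamma_h M h \<alpha> X0 Y l)"
proof (rule monoI)
  fix t t' :: ereal assume tt: "t \<le> t'"
  show "Gamma_h M h \<alpha> X0 Y l t \<le> Gamma_h M h \<alpha> X0 Y l t'"
  proof (cases t rule: Gamma_cases)
    case 1 then show ?thesis using Gamma_bounds[OF h] by (simp add: Gamma_neg)
  next
    case 2 then show ?thesis using tt by simp
  next
    case (3 r)
    note t3 = 3
    show ?thesis
    proof (cases t' rule: Gamma_cases)
      case 1 then show ?thesis using tt t3 by (metis ereal_less_eq(3) order.trans not_le zero_ereal_def)
    next
      case 2 then show ?thesis using Gamma_bounds[OF h] by (simp add: Gamma_inf)
    next
      case (3 r')
      then have "r \<le> r'" using t3 tt by simp
      then have "nat \<lfloor>r/h\<rfloor> \<le> nat \<lfloor>r'/h\<rfloor>" using h by (intro nat_mono floor_mono divide_right_mono) auto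
      then show ?thesis using t3 3
        by (simp add: Gamma_eq[OF h] finite_measure_mono Ev_meas[OF X0 Y] Ev_mono_K)
    qed
  qed
qed

lemma Gamma_cont:
  assumes h: "h > 0" and a: "\<alpha> > 0" and X0: "X0 \<in> borel_measurable M" and Y: "\<And>k. Y k \<in> borel_measurable M"
    and ind: "indep_vars (\<lambda>_. borel) (\<lambda>i. case i of None \<Rightarrow> X0 | Some k \<Rightarrow> Y k) (UNIV :: nat option set)"
    and atom: "\<And>x. measure M {\<omega> \<in> space M. X0 \<omega> = x} = 0"
    and inc: "\<And>t. incseq (\<lambda>n. l n t)" and lim: "\<And>t. (\<lambda>n. l n t) \<longlonglongrightarrow> G t"
  shows "(\<lambda>n. measure M (Ev h \<alpha> X0 Y (l n) K)) \<longlonglongrightarrow> measure M (Ev h \<alpha> X0 Y G K)"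
proof -
  define A where "A n = Ev h \<alpha> X0 Y (l n) K" for n
  define E where "E = Ev h \<alpha> X0 Y G K"
  have Am: "range A \<subseteq> sets M" unfolding A_def using Ev_meas[OF X0 Y] by auto
  have Em: "E \<in> sets M" unfolding E_def using Ev_meas[OF X0 Y] by auto
  have "\<alpha> * l n x \<le> \<alpha> * l (Suc n) x" for n x
    using inc[of x] a by (simp add: incseq_Suc_iff mult_left_mono)
  then have incA: "incseq A" unfolding incseq_Suc_iff A_def Ev_def by (blast intro: order_trans)
  have lim1: "(\<lambda>n. measure M (A n)) \<longlonglongrightarrow> measure M (\<Union>n. A n)"
    by (rule finite_Lim_measure_incseq[OF Am incA])
  have UAm: "(\<Union>n. A n) \<in> sets M" using Am by auto
  have sub: "(\<Union>n. A n) \<subseteq> E"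
  proof -
    have "\<alpha> * l n t \<le> \<alpha> * G t" for n t using incseq_le[OF inc lim] a by (simp add: mult_left_mono)
    then show ?thesis unfolding A_def E_def Ev_def by (blast intro: order_trans)
  qed
  define N where "N = (\<Union>j\<in>{..K}. {\<omega> \<in> space M. X0 \<omega> + SS h Y j \<omega> = \<alpha> * G (ereal (h * real j))})"
  have Nsets: "(\<lambda>j. {\<omega> \<in> space M. X0 \<omega> + SS h Y j \<omega> = \<alpha> * G (ereal (h * real j))}) ` {..K} \<subseteq> sets M"
    using eqset_meas(1)[OF SS_meas[OF X0 Y]] by auto
  have Nm: "N \<in> sets M" unfolding N_def using Nsets by auto
  have "measure M N \<le> (\<Sum>j\<le>K. measure M {\<omega> \<in> space M. X0 \<omega> + SS h Y j \<omega> = \<alpha> * G (ereal (h * real j))})"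
    unfolding N_def by (rule finite_measure_subadditive_finite) (use Nsets in auto)
  also have "\<dots> = 0" by (simp add: atomless_sum[OF X0 Y ind atom])
  finally have N0: "measure M N = 0" by (simp add: measure_nonneg antisym)
  have sup: "E \<subseteq> (\<Union>n. A n) \<union> N"
  proof
    fix \<omega> assume "\<omega> \<in> E"
    then obtain j where j: "\<omega> \<in> space M" "j \<le> K" "X0 \<omega> + SS h Y j \<omega> \<le> \<alpha> * G (ereal (h * real j))"
      unfolding E_def Ev_def by auto
    show "\<omega> \<in> (\<Union>n. A n) \<union> N"
    proof (cases "X0 \<omega> + SS h Y j \<omega> = \<alpha> * G (ereal (h * real j))")
      case True then show ?thesis unfolding N_def using j by auto
    next
      case False
      then have lt: "X0 \<omega> + SS h Y j \<omega> < \<alpha> * G (ereal (h * real j))" using j by simp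
      have "(\<lambda>n. \<alpha> * l n (ereal (h * real j))) \<longlonglongrightarrow> \<alpha> * G (ereal (h * real j))"
        by (intro tendsto_mult_left lim)
      from order_tendstoD(1)[OF this lt] obtain n where
        "X0 \<omega> + SS h Y j \<omega> < \<alpha> * l n (ereal (h * real j))"
        by (auto simp: eventually_sequentially)
      then have "\<omega> \<in> A n" unfolding A_def Ev_def using j by (auto intro!: exI[of _ j])
      then show ?thesis by auto
    qed
  qed
  have "measure M E \<le> measure M ((\<Union>n. A n) \<union> N)" by (rule finite_measure_mono[OF sup]) (use UAm Nm in auto)
  also have "\<dots> \<le> measure M (\<Union>n. A n) + measure M N" by (rule measure_Un_le[OF UAm Nm])
  finally have "measure M E \<le> measure M (\<Union>n. A n)" using N0 by simp
  moreover have "measure M (\<Union>n. A n) \<le> measure M E" by (rule finite_measure_mono[OF sub Em])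
  ultimately have "measure M (\<Union>n. A n) = measure M E" by simp
  then show ?thesis using lim1 unfolding A_def E_def by simp
qed

end


theorem lemma3p1:
  fixes M :: "'a measure" and h \<alpha> :: real and X0 :: "'a \<Rightarrow> real"
    and Y :: "nat \<Rightarrow> 'a \<Rightarrow> real" and \<Lambda> :: "real \<Rightarrow> real"
  assumes "prob_space M"
    and "\<alpha> > 0" and "h > 0"
    and "\<And>k. Y k \<in> borel_measurable M"
    and "prob_space.indep_vars M (\<lambda>_. borel) Y UNIV"
    and "\<And>k. distr M borel (Y k) = distr M borel (Y 0)"
    and "integrable M (Y 0)" and "integral\<^sup>L M (Y 0) = 0"
    and "integrable M (\<lambda>\<omega>. (Y 0 \<omega>)\<^sup>2)" and "integral\<^sup>L M (\<lambda>\<omega>. (Y 0 \<omega>)\<^sup>2) = 1"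
    and "X0 \<in> borel_measurable M"
    and "prob_space.indep_vars M (\<lambda>_. borel) (\<lambda>i. case i of None \<Rightarrow> X0 | Some k \<Rightarrow> Y k) (UNIV :: nat option set)"
    and "\<And>x. measure M {\<omega> \<in> space M. X0 \<omega> = x} = 0"
    and "minimal_donsker_solution M h \<alpha> X0 Y \<Lambda>"
  shows "\<exists>L. in_M L \<and> conv_M (\<lambda>k. (Gamma_h M h \<alpha> X0 Y ^^ k) (\<lambda>_. 0)) L \<and>
           (\<forall>t\<ge>0. \<Lambda> t = \<alpha> * L (ereal t))"
proof -
  interpret prob_space M by fact
  note a = assms(2) and h = assms(3) and Y = assms(4) and X0 = assms(11) and ind = assms(12)
    and atom = assms(13) and mins = assms(14)
  define \<Gamma> where "\<Gamma> = Gamma_h M h \<alpha> X0 Y"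
  define l where "l k = (\<Gamma> ^^ k) (\<lambda>_. 0)" for k
  have l0: "l 0 = (\<lambda>_. 0)" by (simp add: l_def)
  have lSuc: "l (Suc k) = \<Gamma> (l k)" for k by (simp add: l_def)
  have lb: "0 \<le> l k t \<and> l k t \<le> 1" for k t
    by (cases k) (auto simp: l0 lSuc \<Gamma>_def Gamma_bounds[OF h])
  have linc: "l k t \<le> l (Suc k) t" for k t
  proof (induction k arbitrary: t)
    case 0 then show ?case using lb[of "Suc 0" t] by (simp add: l0)
  next
    case (Suc k)
    show ?case unfolding lSuc[of "Suc k"] lSuc[of k] \<Gamma>_def
      by (rule Gamma_mono_l[OF h a X0 Y]) (use Suc.IH in \<open>simp add: lSuc \<Gamma>_def\<close>)
  qed
  have inc: "incseq (\<lambda>k. l k t)" for t by (rule incseq_SucI) (rule linc)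
  define L where "L t = (SUP k. l k t)" for t
  have lim: "(\<lambda>k. l k t) \<longlonglongrightarrow> L t" for t unfolding L_def
    by (rule LIMSEQ_incseq_SUP[OF _ inc]) (use lb in \<open>auto intro!: bdd_aboveI[of _ 1]\<close>)
  have limS: "(\<lambda>k. l (Suc k) t) \<longlonglongrightarrow> L t" for t using lim[of t] by (rule LIMSEQ_Suc)
  have fixL: "L t = \<Gamma> L t" for t
  proof (cases t rule: Gamma_cases)
    case 1
    have "(\<lambda>k. l (Suc k) t) \<longlonglongrightarrow> 0" unfolding lSuc \<Gamma>_def using 1 by (simp add: Gamma_neg)
    then have "L t = 0" using limS LIMSEQ_unique by blast
    then show ?thesis using 1 by (simp add: \<Gamma>_def Gamma_neg)
  next
    case 2
    have "(\<lambda>k. l (Suc k) t) \<longlonglongrightarrow> 1" unfolding lSuc \<Gamma>_def using 2 by (simp add: Gamma_inf)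
    then have "L t = 1" using limS LIMSEQ_unique by blast
    then show ?thesis using 2 by (simp add: \<Gamma>_def Gamma_inf)
  next
    case (3 r)
    have "(\<lambda>k. measure M (Ev h \<alpha> X0 Y (l k) (nat \<lfloor>r/h\<rfloor>))) \<longlonglongrightarrow> measure M (Ev h \<alpha> X0 Y L (nat \<lfloor>r/h\<rfloor>))"
      by (rule Gamma_cont[OF h a X0 Y ind atom inc lim])
    then have "(\<lambda>k. l (Suc k) t) \<longlonglongrightarrow> \<Gamma> L t"
      unfolding lSuc \<Gamma>_def 3 using 3 by (simp add: Gamma_eq[OF h])
    then show ?thesis using limS LIMSEQ_unique by blast
  qed
  have Lgrid: "L (ereal u) = measure M (Ev h \<alpha> X0 Y L (nat \<lfloor>u/h\<rfloor>))" if "u \<ge> 0" for u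
    using fixL[of "ereal u"] that by (simp add: \<Gamma>_def Gamma_eq[OF h])
  define \<Lambda>' where "\<Lambda>' s = \<alpha> * L (ereal (h * of_int \<lfloor>s/h\<rfloor>))" for s
  have \<Lambda>'eq: "\<Lambda>' t = \<alpha> * L (ereal t)" if t: "t \<ge> 0" for t
  proof -
    have fl: "\<lfloor>(h * of_int \<lfloor>t/h\<rfloor>)/h\<rfloor> = \<lfloor>t/h\<rfloor>" using h by simp
    have "0 \<le> h * of_int \<lfloor>t/h\<rfloor>" using h t by simp
    then show ?thesis unfolding \<Lambda>'_def using t by (simp add: Lgrid fl)
  qed
  have sol: "donsker_solution M h \<alpha> X0 Y \<Lambda>'"
    unfolding donsker_solution_def
  proof (intro allI impI)
    fix t :: real assume t: "0 \<le> t"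
    have "\<Gamma> L (ereal t) = measure M {\<omega> \<in> space M.
        hit_time (\<lambda>s \<omega>. X0 \<omega> + Bh h Y s \<omega> - \<Lambda>' s) \<omega> \<le> ereal t}"
      using t by (simp add: \<Gamma>_def Gamma_h_def \<Lambda>'_def)
    then show "\<Lambda>' t = \<alpha> * measure M {\<omega> \<in> space M.
        hit_time (\<lambda>s \<omega>. X0 \<omega> + Bh h Y s \<omega> - \<Lambda>' s) \<omega> \<le> ereal t}"
      using \<Lambda>'eq[OF t] fixL[of "ereal t"] by simp
  qed
  have Lsol: "donsker_solution M h \<alpha> X0 Y \<Lambda>" and Lmin: "\<And>t. t \<ge> 0 \<Longrightarrow> \<Lambda> t \<le> \<Lambda>' t"
    using mins sol unfolding minimal_donsker_solution_def by auto
  define E where "E t = {\<omega> \<in> space M. hit_time (\<lambda>s \<omega>. X0 \<omega> + Bh h Y s \<omega> - \<Lambda> s) \<omega> \<le> ereal t}" for t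
  have \<Lambda>E: "\<Lambda> t = \<alpha> * measure M (E t)" if "t \<ge> 0" for t
    using Lsol that unfolding donsker_solution_def E_def by auto
  have lower: "\<alpha> * l k (ereal t) \<le> \<Lambda> t" if "t \<ge> 0" for k t
    using that
  proof (induction k arbitrary: t)
    case 0 then show ?case using \<Lambda>E[OF 0] a by (simp add: l0)
  next
    case (Suc k)
    have sub: "Ev h \<alpha> X0 Y (l k) (nat \<lfloor>t/h\<rfloor>) \<subseteq> E t"
    proof
      fix \<omega> assume "\<omega> \<in> Ev h \<alpha> X0 Y (l k) (nat \<lfloor>t/h\<rfloor>)"
      then obtain j where j: "\<omega> \<in> space M" "j \<le> nat \<lfloor>t/h\<rfloor>"
        "X0 \<omega> + SS h Y j \<omega> \<le> \<alpha> * l k (ereal (h * real j))" unfolding Ev_def by auto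
      have hj: "0 \<le> h * real j" using h by simp
      have "\<alpha> * l k (ereal (h * real j)) \<le> \<Lambda> (h * real j)" by (rule Suc.IH[OF hj])
      moreover have "Bh h Y (h * real j) \<omega> = SS h Y j \<omega>" using h by (simp add: Bh_grid)
      ultimately have mem: "ereal (h * real j) \<in> {ereal s | s. 0 \<le> s \<and> X0 \<omega> + Bh h Y s \<omega> - \<Lambda> s \<le> 0}"
        using j(3) hj by auto
      have "0 \<le> \<lfloor>t/h\<rfloor>" using Suc.prems h by simp
      then have "int j \<le> \<lfloor>t/h\<rfloor>" using j(2) by (simp add: le_nat_iff)
      then have "real j \<le> real_of_int \<lfloor>t/h\<rfloor>" by (metis of_int_le_iff of_int_of_nat_eq)
      also have "\<dots> \<le> t/h" by simp
      finally have "h * real j \<le> t" using h by (simp add: field_simps)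
      have "hit_time (\<lambda>s \<omega>. X0 \<omega> + Bh h Y s \<omega> - \<Lambda> s) \<omega> \<le> ereal (h * real j)"
        unfolding hit_time_def by (rule Inf_lower[OF mem])
      also have "\<dots> \<le> ereal t" using \<open>h * real j \<le> t\<close> by simp
      finally show "\<omega> \<in> E t" unfolding E_def using j(1) by simp
    qed
    have Em: "E t \<in> sets M" unfolding E_def by (rule hit_meas[OF h X0 Y])
    have "l (Suc k) (ereal t) = measure M (Ev h \<alpha> X0 Y (l k) (nat \<lfloor>t/h\<rfloor>))"
      using Suc.prems by (simp add: lSuc \<Gamma>_def Gamma_eq[OF h])
    also have "\<dots> \<le> measure M (E t)" by (rule finite_measure_mono[OF sub Em])
    finally show ?case using \<Lambda>E[OF Suc.prems] a by (simp add: mult_left_mono)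
  qed
  have main: "\<Lambda> t = \<alpha> * L (ereal t)" if t: "t \<ge> 0" for t
  proof (rule antisym)
    show "\<Lambda> t \<le> \<alpha> * L (ereal t)" using Lmin[OF t] \<Lambda>'eq[OF t] by simp
    have "(\<lambda>k. \<alpha> * l k (ereal t)) \<longlonglongrightarrow> \<alpha> * L (ereal t)" by (intro tendsto_mult_left lim)
    then show "\<alpha> * L (ereal t) \<le> \<Lambda> t" by (rule LIMSEQ_le_const2) (use lower[OF t] in blast)
  qed
  have Lb: "0 \<le> L t \<and> L t \<le> 1" for t using fixL[of t] Gamma_bounds[OF h] by (simp add: \<Gamma>_def)
  have inM: "in_M L"
    unfolding in_M_def
  proof (intro conjI allI impI)
    have eq: "\<Gamma> L = L" using fixL by auto
    have m: "mono (\<Gamma> L)" unfolding \<Gamma>_def by (rule Gamma_mono_t[OF h X0 Y])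
    show "mono L" using m by (simp only: eq)
    fix t :: ereal
    show "0 \<le> L t" "L t \<le> 1" using Lb by auto
    show "t < 0 \<Longrightarrow> L t = 0" using fixL[of t] by (simp add: \<Gamma>_def Gamma_neg)
  next
    show "L \<infinity> = 1" using fixL[of \<infinity>] by (simp add: \<Gamma>_def Gamma_inf)
  next
    fix t :: ereal
    show "continuous (at_right t) L"
    proof (cases t rule: Gamma_cases)
      case 1
      have "eventually (\<lambda>u. L u = L t) (at_right t)"
      proof (rule eventually_at_rightI)
        fix u assume "u \<in> {t<..<0}"
        then show "L u = L t" using 1 fixL[of t] fixL[of u] by (simp add: \<Gamma>_def Gamma_neg)
      qed (use 1 in simp)
      then show ?thesis unfolding continuous_within by (rule tendsto_eventually)
    next
      case 2
      then have "at_right t = bot" using trivial_limit_at_right_top[where 'a=ereal] by (simp add: top_ereal_def)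
      then show ?thesis by simp
    next
      case (3 r)
      define K where "K = nat \<lfloor>r/h\<rfloor>"
      have rK: "r < h * (real K + 1)"
      proof -
        have "r/h < real_of_int \<lfloor>r/h\<rfloor> + 1" by linarith
        also have "real_of_int \<lfloor>r/h\<rfloor> = real K" unfolding K_def using 3 h by simp
        finally show ?thesis using h by (simp add: field_simps)
      qed
      have "eventually (\<lambda>u. L u = L t) (at_right t)"
      proof (rule eventually_at_rightI)
        fix u assume u: "u \<in> {t<..<ereal (h * (real K + 1))}"
        then obtain v where v: "u = ereal v" "r < v" "v < h * (real K + 1)" using 3
          by (cases u) auto
        have "v/h < real K + 1" using v h by (simp add: field_simps)
        moreover have "r/h \<le> v/h" using v h by (simp add: divide_right_mono)
        moreover have "real K \<le> r/h" unfolding K_def using 3 h by simp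
        ultimately have "\<lfloor>v/h\<rfloor> = int K" by (intro floor_unique) (auto simp: floor_le_iff)
        then have "nat \<lfloor>v/h\<rfloor> = K" by simp
        then show "L u = L t" using v 3 Lgrid[of v] Lgrid[of r] unfolding K_def by simp
      qed (use 3 rK in simp)
      then show ?thesis unfolding continuous_within by (rule tendsto_eventually)
    qed
  qed
  have conv: "conv_M (\<lambda>k. (Gamma_h M h \<alpha> X0 Y ^^ k) (\<lambda>_. 0)) L"
    unfolding conv_M_def using lim by (simp add: l_def \<Gamma>_def)
  show ?thesis using inM conv main by blast
qed

end
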